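(* Let $\ket\psi$ be a pure $n$-qubit state, $t\ge1$, and $p_t$ the output distribution of the $t$-copy hidden cut circuit on $\ket\psi$. Then for every $\bm s\in\{0,1\}^n$, $$\mathbb E_{\bm x\sim p_t}[\bm x\cdot\bm s] = \tfrac12\bigl(1-P(\bm s)^t\bigr).$$
   Context: Subsystems are bitstrings $\bm s\in\{0,1\}^n$ (qubit $j$ included iff $s_j=1$); $\bm x\cdot\bm s\in\{0,1\}$ is the dot product mod 2. $\rho_{\bm s}=\mathrm{Tr}_{\bar{\bm s}}\ket\psi\bra\psi$ and $P(\bm s)=\mathrm{Tr}(\rho_{\bm s}^2)$ (with $P(\bm 0)=1$). $\mathrm{SWAP}_{\bm s}$ swaps the qubits of subsystem $\bm s$ between two copies of the $n$-qubit space. The $t$-copy hidden cut circuit: an $n$-qubit group register is initialized to $\ket{0^n}$ and a state register to $(\ket\psi\ket\psi)^{\otimes t}$; apply $H^{\otimes n}$ to the group register; apply $\sum_{\bm s}\ket{\bm s}\bra{\bm s}\otimes \mathrm{SWAP}_{\bm s}^{\otimes t}$; apply $H^{\otimes n}$ to the group register; measure the group register in the computational basis; $p_t$ denotes the resulting distribution. *)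

theory Defs
  imports Complex_Main
begin

text \<open>Computational basis states of n qubits: bitstrings of length n.\<close>
definition bits :: "nat \<Rightarrow> bool list set" where
  "bits n = {xs. length xs = n}"

definition dot2 :: "bool list \<Rightarrow> bool list \<Rightarrow> nat" where
  "dot2 x s = card {j. j < length x \<and> x ! j \<and> s ! j} mod 2"

definition pure_state :: "nat \<Rightarrow> (bool list \<Rightarrow> complex) \<Rightarrow> bool" where
  "pure_state n \<psi> \<longleftrightarrow> (\<Sum>x\<in>bits n. (cmod (\<psi> x))^2) = 1"

definition sub_bits :: "nat \<Rightarrow> bool list \<Rightarrow> bool list set" where
  "sub_bits n s = {u \<in> bits n. \<forall>j<n. \<not> s ! j \<longrightarrow> \<not> u ! j}"

definition comp_bits :: "nat \<Rightarrow> bool list \<Rightarrow> bool list set" where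
  "comp_bits n s = {w \<in> bits n. \<forall>j<n. s ! j \<longrightarrow> \<not> w ! j}"

definition merge_bits :: "bool list \<Rightarrow> bool list \<Rightarrow> bool list" where
  "merge_bits u w = map2 (\<or>) u w"

text \<open>Reduced density matrix rho_s = Tr_{complement of s} |psi><psi|, indexed by
  bitstrings of the qubits in s (zero outside s).\<close>
definition rho :: "nat \<Rightarrow> (bool list \<Rightarrow> complex) \<Rightarrow> bool list \<Rightarrow> bool list \<Rightarrow> bool list \<Rightarrow> complex" where
  "rho n \<psi> s u v = (\<Sum>w\<in>comp_bits n s. \<psi> (merge_bits u w) * cnj (\<psi> (merge_bits v w)))"

definition purity :: "nat \<Rightarrow> (bool list \<Rightarrow> complex) \<Rightarrow> bool list \<Rightarrow> real" where
  "purity n \<psi> s = Re (\<Sum>u\<in>sub_bits n s. \<Sum>v\<in>sub_bits n s. rho n \<psi> s u v * rho n \<psi> s v u)"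

text \<open>State register: 2t copies of the n-qubit space; copies 2i and 2i+1 form pair i.\<close>
definition reg_bits :: "nat \<Rightarrow> nat \<Rightarrow> bool list list set" where
  "reg_bits n t = {rs. length rs = 2 * t \<and> (\<forall>r\<in>set rs. length r = n)}"

definition partner :: "nat \<Rightarrow> nat" where
  "partner k = (if even k then k + 1 else k - 1)"

text \<open>Action of SWAP_s^{tensor t} on basis states of the state register.\<close>
definition swap_map :: "nat \<Rightarrow> bool list \<Rightarrow> bool list list \<Rightarrow> bool list list" where
  "swap_map n s rs = map (\<lambda>k. map (\<lambda>j. if s ! j then rs ! partner k ! j else rs ! k ! j) [0..<n])
                        [0..<length rs]"

text \<open>Joint states of (group register, state register).\<close>
type_synonym jstate = "bool list \<Rightarrow> bool list list \<Rightarrow> complex"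

definition init_state :: "nat \<Rightarrow> nat \<Rightarrow> (bool list \<Rightarrow> complex) \<Rightarrow> jstate" where
  "init_state n t \<psi> g rs =
     (if g = replicate n False then 1 else 0) * (\<Prod>k<2 * t. \<psi> (rs ! k))"

definition hadamard_group :: "nat \<Rightarrow> nat \<Rightarrow> jstate \<Rightarrow> jstate" where
  "hadamard_group n t \<phi> g rs =
     (\<Sum>g'\<in>bits n. complex_of_real (1 / sqrt (2 ^ n) * (-1) ^ dot2 g g') * \<phi> g' rs)"

text \<open>The controlled swap  sum_s |s><s| \<otimes> SWAP_s^{tensor t}.\<close>
definition ctrl_swap :: "nat \<Rightarrow> nat \<Rightarrow> jstate \<Rightarrow> jstate" where
  "ctrl_swap n t \<phi> g rs =
     (\<Sum>rs'\<in>reg_bits n t. (if rs = swap_map n g rs' then 1 else 0) * \<phi> g rs')"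

definition final_state :: "nat \<Rightarrow> nat \<Rightarrow> (bool list \<Rightarrow> complex) \<Rightarrow> jstate" where
  "final_state n t \<psi> =
     hadamard_group n t (ctrl_swap n t (hadamard_group n t (init_state n t \<psi>)))"

definition hidden_cut_dist :: "nat \<Rightarrow> nat \<Rightarrow> (bool list \<Rightarrow> complex) \<Rightarrow> bool list \<Rightarrow> real" where
  "hidden_cut_dist n t \<psi> x = (\<Sum>rs\<in>reg_bits n t. (cmod (final_state n t \<psi> x rs))^2)"

end

theory Submission
  imports Defs
begin


definition xorb :: "bool list \<Rightarrow> bool list \<Rightarrow> bool list" where
  "xorb g h = map2 (\<noteq>) g h"
definition mix :: "nat \<Rightarrow> bool list \<Rightarrow> bool list \<Rightarrow> bool list \<Rightarrow> bool list" where
  "mix n s p q = map (\<lambda>j. if s!j then p!j else q!j) [0..<n]"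
definition Ps :: "nat \<Rightarrow> (bool list \<Rightarrow> complex) \<Rightarrow> bool list list \<Rightarrow> complex" where
  "Ps t \<psi> rs = (\<Prod>k<2*t. \<psi> (rs!k))"
definition sg :: "bool list \<Rightarrow> bool list \<Rightarrow> real" where
  "sg x a = (-1) ^ dot2 x a"

lemma swap_Cons2: "swap_map n s (a#b#rs) = mix n s b a # mix n s a b # swap_map n s rs"
proof (rule nth_equalityI)
  show "length (swap_map n s (a # b # rs)) = length (mix n s b a # mix n s a b # swap_map n s rs)"
    by (simp add: swap_map_def del: upt_Suc)
next
  fix k assume "k < length (swap_map n s (a # b # rs))"
  then have k: "k < Suc (Suc (length rs))" by (simp add: swap_map_def del: upt_Suc)
  show "swap_map n s (a # b # rs) ! k = (mix n s b a # mix n s a b # swap_map n s rs) ! k"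
  proof (cases k)
    case 0 then show ?thesis by (simp add: swap_map_def mix_def partner_def del: upt_Suc)
  next
    case (Suc k1) note k1 = this
    show ?thesis
    proof (cases k1)
      case 0 then show ?thesis using k1 by (simp add: swap_map_def mix_def partner_def del: upt_Suc)
    next
      case (Suc k2)
      have p: "partner (Suc (Suc k2)) = Suc (Suc (partner k2))"
        by (auto simp: partner_def)
      have "k2 < length rs" using k k1 Suc by simp
      then show ?thesis using k1 Suc p
        by (simp add: swap_map_def nth_append del: upt_Suc)
    qed
  qed
qed

lemma swap_length[simp]: "length (swap_map n s rs) = length rs"
  by (simp add: swap_map_def del: upt_Suc)

lemma reg_0: "reg_bits n 0 = {[]}"
  by (auto simp: reg_bits_def)

lemma reg_Suc: "reg_bits n (Suc t) = (\<lambda>(a,b,r). a#b#r) ` (bits n \<times> bits n \<times> reg_bits n t)"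
proof (intro equalityI subsetI)
  fix rs assume "rs \<in> reg_bits n (Suc t)"
  then have l: "length rs = Suc (Suc (2*t))" and e: "\<forall>r\<in>set rs. length r = n"
    by (auto simp: reg_bits_def)
  then obtain a b r where rs: "rs = a#b#r" by (metis length_Suc_conv)
  have "a \<in> bits n" "b \<in> bits n" "r \<in> reg_bits n t"
    using l e unfolding rs by (auto simp: reg_bits_def bits_def)
  then show "rs \<in> (\<lambda>(a,b,r). a#b#r) ` (bits n \<times> bits n \<times> reg_bits n t)"
    unfolding rs by (intro image_eqI[where x="(a,b,r)"]) auto
next
  fix rs assume "rs \<in> (\<lambda>(a,b,r). a#b#r) ` (bits n \<times> bits n \<times> reg_bits n t)"
  then obtain a b r where "rs = a#b#r" "a \<in> bits n" "b \<in> bits n" "r \<in> reg_bits n t"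
    by auto
  then show "rs \<in> reg_bits n (Suc t)" by (auto simp: reg_bits_def bits_def)
qed

lemma swap_reg: "rs \<in> reg_bits n t \<Longrightarrow> swap_map n s rs \<in> reg_bits n t"
  by (auto simp: reg_bits_def swap_map_def)

lemma bitsD: "x \<in> bits n \<Longrightarrow> length x = n" by (simp add: bits_def)

lemma xorb_bits: "g \<in> bits n \<Longrightarrow> h \<in> bits n \<Longrightarrow> xorb g h \<in> bits n"
  by (simp add: bits_def xorb_def)

lemma xorb_nth: "g \<in> bits n \<Longrightarrow> h \<in> bits n \<Longrightarrow> j < n \<Longrightarrow> xorb g h ! j = (g!j \<noteq> h!j)"
  by (simp add: bits_def xorb_def)

lemma mix_comp:
  assumes "length p = n" "length q = n" "g \<in> bits n" "h \<in> bits n"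
  shows "mix n g (mix n h p q) (mix n h q p) = mix n (xorb g h) q p"
  using assms by (auto simp: mix_def xorb_nth intro!: nth_equalityI)

lemma mix_zero:
  assumes "length q = n"
  shows "mix n (replicate n False) p q = q"
  using assms by (auto simp: mix_def intro!: nth_equalityI)

lemma swap_comp:
  assumes "rs \<in> reg_bits n t" "g \<in> bits n" "h \<in> bits n"
  shows "swap_map n g (swap_map n h rs) = swap_map n (xorb g h) rs"
  using assms(1)
proof (induction t arbitrary: rs)
  case 0 then show ?case by (simp add: reg_0 swap_map_def)
next
  case (Suc t)
  then obtain a b r where rs: "rs = a#b#r" "a \<in> bits n" "b \<in> bits n" "r \<in> reg_bits n t"
    by (auto simp: reg_Suc)
  show ?case using rs Suc.IH[OF rs(4)] assms(2,3)
    by (simp add: swap_Cons2 mix_comp bitsD)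
qed

lemma swap_zero:
  assumes "rs \<in> reg_bits n t"
  shows "swap_map n (replicate n False) rs = rs"
  using assms
proof (induction t arbitrary: rs)
  case 0 then show ?case by (simp add: reg_0 swap_map_def)
next
  case (Suc t)
  then obtain a b r where rs: "rs = a#b#r" "a \<in> bits n" "b \<in> bits n" "r \<in> reg_bits n t"
    by (auto simp: reg_Suc)
  show ?case using rs Suc.IH[OF rs(4)]
    by (simp add: swap_Cons2 mix_zero bitsD)
qed

lemma xorb_self: "g \<in> bits n \<Longrightarrow> xorb g g = replicate n False"
  by (auto simp: bits_def xorb_def intro!: nth_equalityI)

lemma swap_invol:
  assumes "rs \<in> reg_bits n t" "g \<in> bits n"
  shows "swap_map n g (swap_map n g rs) = rs"
  using swap_comp[OF assms assms(2)] xorb_self[OF assms(2)] swap_zero[OF assms(1)] by simp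



lemma dot2_set_Cons:
  "{j. j < length (b#x) \<and> (b#x)!j \<and> (c#a)!j} =
   (if b\<and>c then {0} else {}) \<union> Suc ` {j. j < length x \<and> x!j \<and> a!j}"
proof (rule set_eqI)
  fix j show "j \<in> {j. j < length (b#x) \<and> (b#x)!j \<and> (c#a)!j} \<longleftrightarrow>
    j \<in> (if b\<and>c then {0} else {}) \<union> Suc ` {j. j < length x \<and> x!j \<and> a!j}"
    by (cases j) auto
qed

lemma sg_card: "sg x a = (-1) ^ card {j. j < length x \<and> x!j \<and> a!j}"
  unfolding sg_def dot2_def by (simp add: minus_one_power_iff)

lemma sg_Cons: "sg (b#x) (c#a) = (if b \<and> c then -1 else 1) * sg x a"
proof -
  have d: "{0::nat} \<inter> Suc ` {j. j < length x \<and> x!j \<and> a!j} = {}" by auto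
  have "card {j. j < length (b#x) \<and> (b#x)!j \<and> (c#a)!j} =
     (if b\<and>c then 1 else 0) + card {j. j < length x \<and> x!j \<and> a!j}"
    unfolding dot2_set_Cons using d
    by (simp add: card_Un_disjoint card_image)
  then show ?thesis unfolding sg_card by simp
qed

lemma bits_0: "bits 0 = {[]}" by (auto simp: bits_def)

lemma bits_Suc: "bits (Suc n) = (\<lambda>(b,x). b#x) ` (UNIV \<times> bits n)"
proof (intro equalityI subsetI)
  fix y assume "y \<in> bits (Suc n)"
  then obtain b x where y: "y = b#x" "x \<in> bits n" by (auto simp: bits_def length_Suc_conv)
  then show "y \<in> (\<lambda>(b,x). b#x) ` (UNIV \<times> bits n)"
    by (intro image_eqI[where x="(b,x)"]) auto
qed (auto simp: bits_def)

lemma finite_bits[simp]: "finite (bits n)"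
proof (induction n)
  case 0 then show ?case by (simp add: bits_0)
next
  case (Suc n) then show ?case by (simp add: bits_Suc)
qed

lemma sum_bits_Suc: "(\<Sum>y\<in>bits (Suc n). f y) = (\<Sum>x\<in>bits n. f (False#x) + f (True#x))"
proof -
  have inj: "inj_on (\<lambda>(b,x). b#x) (UNIV \<times> bits n)" by (auto simp: inj_on_def)
  have "(\<Sum>y\<in>bits (Suc n). f y) = (\<Sum>(b,x)\<in>UNIV \<times> bits n. f (b#x))"
    unfolding bits_Suc by (subst sum.reindex[OF inj]) (simp add: case_prod_beta)
  also have "\<dots> = (\<Sum>b\<in>UNIV. \<Sum>x\<in>bits n. f (b#x))"
    by (simp add: sum.cartesian_product)
  also have "\<dots> = (\<Sum>x\<in>bits n. f (False#x) + f (True#x))"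
    by (simp add: UNIV_bool sum.distrib)
  finally show ?thesis .
qed

lemma bits_Suc_cases:
  assumes "y \<in> bits (Suc n)" obtains b x where "y = b#x" "x \<in> bits n"
  using assms by (auto simp: bits_def length_Suc_conv)

lemma char_sum: "a \<in> bits n \<Longrightarrow> (\<Sum>x\<in>bits n. sg x a) = (if a = replicate n False then 2^n else 0)"
proof (induction n arbitrary: a)
  case 0 then show ?case by (simp add: bits_0 sg_def dot2_def)
next
  case (Suc n)
  then obtain c a' where a: "a = c#a'" "a' \<in> bits n" by (auto elim: bits_Suc_cases)
  have "(\<Sum>x\<in>bits (Suc n). sg x a) = (\<Sum>x\<in>bits n. (1 + (if c then -1 else 1)) * sg x a')"
    unfolding sum_bits_Suc a by (simp add: sg_Cons algebra_simps)
  also have "\<dots> = (1 + (if c then -1 else 1)) * (\<Sum>x\<in>bits n. sg x a')"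
    by (simp add: sum_distrib_left)
  finally show ?case using Suc.IH[OF a(2)] a by auto
qed

lemma xorb_Cons: "xorb (c#g) (d#h) = (c \<noteq> d) # xorb g h"
  by (simp add: xorb_def)

lemma sg_mult: "x \<in> bits n \<Longrightarrow> g \<in> bits n \<Longrightarrow> h \<in> bits n \<Longrightarrow> sg x g * sg x h = sg x (xorb g h)"
proof (induction n arbitrary: x g h)
  case 0 then show ?case by (simp add: bits_0 sg_def dot2_def)
next
  case (Suc n)
  obtain b x' where x: "x = b#x'" "x' \<in> bits n" using Suc.prems(1) by (auto elim: bits_Suc_cases)
  obtain c g' where g: "g = c#g'" "g' \<in> bits n" using Suc.prems(2) by (auto elim: bits_Suc_cases)
  obtain d h' where h: "h = d#h'" "h' \<in> bits n" using Suc.prems(3) by (auto elim: bits_Suc_cases)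
  show ?case using Suc.IH[OF x(2) g(2) h(2), symmetric] unfolding x g h xorb_Cons sg_Cons
    by auto
qed

lemma sg_zero: "x \<in> bits n \<Longrightarrow> sg x (replicate n False) = 1"
proof -
  assume "x \<in> bits n"
  then have e: "{j. j < length x \<and> x!j \<and> replicate n False ! j} = {}" by (auto simp: bits_def)
  show ?thesis by (simp only: sg_def dot2_def e) simp
qed

lemma xorb_eq_zero: "p \<in> bits n \<Longrightarrow> h \<in> bits n \<Longrightarrow> (xorb p h = replicate n False) = (h = p)"
  by (auto simp: bits_def xorb_def list_eq_iff_nth_eq)

lemma triple_sum:
  assumes "s \<in> bits n" "g \<in> bits n" "h \<in> bits n"
  shows "(\<Sum>x\<in>bits n. sg x s * sg x g * sg x h) = (if h = xorb s g then 2^n else 0)"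
proof -
  have "(\<Sum>x\<in>bits n. sg x s * sg x g * sg x h) = (\<Sum>x\<in>bits n. sg x (xorb (xorb s g) h))"
    using assms by (intro sum.cong) (simp_all add: sg_mult xorb_bits)
  then show ?thesis using assms by (simp add: char_sum xorb_bits xorb_eq_zero)
qed

lemma dot2_sg: "real (dot2 x s) = (1 - sg x s) / 2"
  unfolding sg_def dot2_def by (auto simp: minus_one_power_iff odd_iff_mod_2_eq_one)



definition Zs :: "nat \<Rightarrow> (bool list \<Rightarrow> complex) \<Rightarrow> bool list \<Rightarrow> complex" where
  "Zs n \<psi> s = (\<Sum>a\<in>bits n. \<Sum>b\<in>bits n.
     \<psi> a * \<psi> b * cnj (\<psi> (mix n s b a)) * cnj (\<psi> (mix n s a b)))"

definition V :: "nat \<Rightarrow> nat \<Rightarrow> (bool list \<Rightarrow> complex) \<Rightarrow> bool list \<Rightarrow> complex" where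
  "V n t \<psi> s = (\<Sum>rs\<in>reg_bits n t. Ps t \<psi> rs * cnj (Ps t \<psi> (swap_map n s rs)))"

lemma Ps_Cons2: "Ps (Suc t) \<psi> (a#b#r) = \<psi> a * \<psi> b * Ps t \<psi> r"
proof -
  have "2 * Suc t = Suc (Suc (2*t))" by simp
  then show ?thesis unfolding Ps_def by (simp only: prod.lessThan_Suc_shift) simp
qed

lemma finite_reg[simp]: "finite (reg_bits n t)"
  by (induction t) (simp_all add: reg_0 reg_Suc)

lemma sum_reg_Suc:
  "(\<Sum>rs\<in>reg_bits n (Suc t). f rs) = (\<Sum>a\<in>bits n. \<Sum>b\<in>bits n. \<Sum>r\<in>reg_bits n t. f (a#b#r))"
proof -
  have inj: "inj_on (\<lambda>(a,b,r). a#b#r) (bits n \<times> bits n \<times> reg_bits n t)"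
    by (auto simp: inj_on_def)
  have "(\<Sum>rs\<in>reg_bits n (Suc t). f rs) = (\<Sum>(a,b,r)\<in>bits n \<times> bits n \<times> reg_bits n t. f (a#b#r))"
    unfolding reg_Suc by (subst sum.reindex[OF inj]) (simp add: case_prod_beta)
  also have "\<dots> = (\<Sum>a\<in>bits n. \<Sum>(b,r)\<in>bits n \<times> reg_bits n t. f (a#b#r))"
    by (simp add: sum.cartesian_product)
  also have "\<dots> = (\<Sum>a\<in>bits n. \<Sum>b\<in>bits n. \<Sum>r\<in>reg_bits n t. f (a#b#r))"
    by (simp add: sum.cartesian_product)
  finally show ?thesis .
qed

lemma V_pow: "V n t \<psi> s = Zs n \<psi> s ^ t"
proof (induction t)
  case 0 then show ?case by (simp add: V_def reg_0 Ps_def)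
next
  case (Suc t)
  have "V n (Suc t) \<psi> s = (\<Sum>a\<in>bits n. \<Sum>b\<in>bits n. \<Sum>r\<in>reg_bits n t.
      (\<psi> a * \<psi> b * cnj (\<psi> (mix n s b a)) * cnj (\<psi> (mix n s a b))) *
      (Ps t \<psi> r * cnj (Ps t \<psi> (swap_map n s r))))"
    unfolding V_def sum_reg_Suc
    by (simp add: swap_Cons2 Ps_Cons2 algebra_simps)
  also have "\<dots> = (\<Sum>a\<in>bits n. \<Sum>b\<in>bits n.
      (\<psi> a * \<psi> b * cnj (\<psi> (mix n s b a)) * cnj (\<psi> (mix n s a b))) * V n t \<psi> s)"
    unfolding V_def by (simp add: sum_distrib_left)
  also have "\<dots> = Zs n \<psi> s * V n t \<psi> s"
    unfolding Zs_def by (simp add: sum_distrib_right)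
  finally show ?case using Suc.IH by simp
qed

lemma Zs_zero:
  assumes "pure_state n \<psi>"
  shows "Zs n \<psi> (replicate n False) = 1"
proof -
  have "Zs n \<psi> (replicate n False) = (\<Sum>a\<in>bits n. \<Sum>b\<in>bits n. (\<psi> a * cnj (\<psi> a)) * (\<psi> b * cnj (\<psi> b)))"
    unfolding Zs_def by (intro sum.cong refl) (simp add: mix_zero bitsD algebra_simps)
  also have "\<dots> = (\<Sum>a\<in>bits n. \<psi> a * cnj (\<psi> a)) * (\<Sum>b\<in>bits n. \<psi> b * cnj (\<psi> b))"
    by (simp add: sum_product)
  also have "(\<Sum>a\<in>bits n. \<psi> a * cnj (\<psi> a)) = (\<Sum>a\<in>bits n. of_real ((cmod (\<psi> a))^2))"
    by (simp only: complex_norm_square)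
  also have "\<dots> = of_real (\<Sum>a\<in>bits n. (cmod (\<psi> a))^2)"
    by (simp only: of_real_sum)
  also have "\<dots> = 1" using assms by (simp add: pure_state_def)
  finally show ?thesis by simp
qed

lemma merge_len: "length (merge_bits u w) = min (length u) (length w)"
  by (simp add: merge_bits_def)

lemma merge_nth: "j < length u \<Longrightarrow> j < length w \<Longrightarrow> merge_bits u w ! j = (u!j \<or> w!j)"
  by (simp add: merge_bits_def)

lemma merge_bij_sum:
  assumes s: "s \<in> bits n"
  shows "(\<Sum>a\<in>bits n. f a) = (\<Sum>u\<in>sub_bits n s. \<Sum>w\<in>comp_bits n s. f (merge_bits u w))"
proof -
  have "(\<Sum>(u,w)\<in>sub_bits n s \<times> comp_bits n s. f (merge_bits u w)) = (\<Sum>a\<in>bits n. f a)"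
  proof (rule sum.reindex_bij_witness[where i="\<lambda>a. (map (\<lambda>j. a!j \<and> s!j) [0..<n], map (\<lambda>j. a!j \<and> \<not> s!j) [0..<n])"
        and j="\<lambda>(u,w). merge_bits u w"])
    fix a assume "a \<in> sub_bits n s \<times> comp_bits n s"
    then obtain u w where a: "a = (u,w)" "u \<in> sub_bits n s" "w \<in> comp_bits n s" by auto
    then have l: "length u = n" "length w = n" by (auto simp: sub_bits_def comp_bits_def bits_def)
    have "map (\<lambda>j. merge_bits u w!j \<and> s!j) [0..<n] = u"
      using a l by (auto simp: merge_nth sub_bits_def comp_bits_def intro!: nth_equalityI)
    moreover have "map (\<lambda>j. merge_bits u w!j \<and> \<not> s!j) [0..<n] = w"
      using a l by (auto simp: merge_nth sub_bits_def comp_bits_def intro!: nth_equalityI)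
    ultimately show "(\<lambda>a. (map (\<lambda>j. a!j \<and> s!j) [0..<n], map (\<lambda>j. a!j \<and> \<not> s!j) [0..<n]))
        ((\<lambda>(u,w). merge_bits u w) a) = a" using a by simp
    show "(\<lambda>(u,w). merge_bits u w) a \<in> bits n" using a l by (simp add: bits_def merge_len)
  next
    fix b assume b: "b \<in> bits n"
    then show "(\<lambda>(u,w). merge_bits u w) (map (\<lambda>j. b!j \<and> s!j) [0..<n], map (\<lambda>j. b!j \<and> \<not> s!j) [0..<n]) = b"
      by (auto simp: merge_nth merge_len bits_def intro!: nth_equalityI)
    show "(map (\<lambda>j. b!j \<and> s!j) [0..<n], map (\<lambda>j. b!j \<and> \<not> s!j) [0..<n]) \<in> sub_bits n s \<times> comp_bits n s"
      by (auto simp: sub_bits_def comp_bits_def bits_def)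
  qed (simp add: case_prod_beta)
  then show ?thesis by (simp add: sum.cartesian_product)
qed

lemma rho_cnj: "rho n \<psi> s v u = cnj (rho n \<psi> s u v)"
  unfolding rho_def by (simp add: mult.commute)

lemma Zs_purity:
  assumes s: "s \<in> bits n"
  shows "Zs n \<psi> s = of_real (purity n \<psi> s)"
proof -
  have mixm: "mix n s (merge_bits v w') (merge_bits u w) = merge_bits v w"
    if "u \<in> sub_bits n s" "v \<in> sub_bits n s" "w \<in> comp_bits n s" "w' \<in> comp_bits n s" for u v w w'
    using that by (auto simp: mix_def merge_nth merge_len sub_bits_def comp_bits_def bits_def intro!: nth_equalityI)
  have rr: "rho n \<psi> s u v * rho n \<psi> s v u = of_real ((cmod (rho n \<psi> s u v))^2)" for u v
    by (subst rho_cnj[of n \<psi> s v u]) (rule complex_norm_square[symmetric])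
  have "Zs n \<psi> s = (\<Sum>u\<in>sub_bits n s. \<Sum>w\<in>comp_bits n s. \<Sum>v\<in>sub_bits n s. \<Sum>w'\<in>comp_bits n s.
      (\<psi> (merge_bits u w) * cnj (\<psi> (merge_bits v w))) * (\<psi> (merge_bits v w') * cnj (\<psi> (merge_bits u w'))))"
    unfolding Zs_def merge_bij_sum[OF s]
    by (intro sum.cong refl) (simp add: mixm algebra_simps)
  also have "\<dots> = (\<Sum>u\<in>sub_bits n s. \<Sum>v\<in>sub_bits n s. \<Sum>w\<in>comp_bits n s. \<Sum>w'\<in>comp_bits n s.
      (\<psi> (merge_bits u w) * cnj (\<psi> (merge_bits v w))) * (\<psi> (merge_bits v w') * cnj (\<psi> (merge_bits u w'))))"
    by (rule sum.cong[OF refl]) (rule sum.swap)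
  also have "\<dots> = (\<Sum>u\<in>sub_bits n s. \<Sum>v\<in>sub_bits n s. rho n \<psi> s u v * rho n \<psi> s v u)"
    by (simp add: rho_def sum_product)
  also have "\<dots> = (\<Sum>u\<in>sub_bits n s. \<Sum>v\<in>sub_bits n s. of_real ((cmod (rho n \<psi> s u v))^2))"
    by (simp only: rr)
  also have "\<dots> = of_real (\<Sum>u\<in>sub_bits n s. \<Sum>v\<in>sub_bits n s. (cmod (rho n \<psi> s u v))^2)"
    by (simp only: of_real_sum)
  finally have Z: "Zs n \<psi> s = of_real (\<Sum>u\<in>sub_bits n s. \<Sum>v\<in>sub_bits n s. (cmod (rho n \<psi> s u v))^2)" .
  moreover have "purity n \<psi> s = (\<Sum>u\<in>sub_bits n s. \<Sum>v\<in>sub_bits n s. (cmod (rho n \<psi> s u v))^2)"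
  proof -
    have "(\<Sum>u\<in>sub_bits n s. \<Sum>v\<in>sub_bits n s. rho n \<psi> s u v * rho n \<psi> s v u)
        = of_real (\<Sum>u\<in>sub_bits n s. \<Sum>v\<in>sub_bits n s. (cmod (rho n \<psi> s u v))^2)"
      by (simp only: rr of_real_sum)
    then show ?thesis unfolding purity_def by (simp only: Re_complex_of_real)
  qed
  ultimately show ?thesis by simp
qed



lemma card_bits: "card (bits n) = 2^n"
proof (induction n)
  case 0 then show ?case by (simp add: bits_0)
next
  case (Suc n)
  have inj: "inj_on (\<lambda>(b,x). b#x) (UNIV \<times> bits n)" by (auto simp: inj_on_def)
  show ?case unfolding bits_Suc card_image[OF inj] card_cartesian_product using Suc by simp
qed

lemma H_init:
  assumes g: "g \<in> bits n"
  shows "hadamard_group n t (init_state n t \<psi>) g rs = of_real (1 / sqrt (2^n)) * Ps t \<psi> rs"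
proof -
  let ?z = "replicate n False"
  have z: "?z \<in> bits n" by (simp add: bits_def)
  have "hadamard_group n t (init_state n t \<psi>) g rs =
     (\<Sum>g'\<in>bits n. if g' = ?z then of_real (1 / sqrt (2 ^ n) * (-1) ^ dot2 g ?z) * Ps t \<psi> rs else 0)"
    unfolding hadamard_group_def init_state_def Ps_def by (intro sum.cong) auto
  also have "\<dots> = of_real (1 / sqrt (2 ^ n) * (-1) ^ dot2 g ?z) * Ps t \<psi> rs"
    using z by (simp add: sum.delta)
  also have "(-1::real) ^ dot2 g ?z = 1" using sg_zero[OF g] by (simp add: sg_def)
  finally show ?thesis by simp
qed

lemma C_H_init:
  assumes g: "g \<in> bits n" and rs: "rs \<in> reg_bits n t"
  shows "ctrl_swap n t (hadamard_group n t (init_state n t \<psi>)) g rs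
         = of_real (1 / sqrt (2^n)) * Ps t \<psi> (swap_map n g rs)"
proof -
  have "ctrl_swap n t (hadamard_group n t (init_state n t \<psi>)) g rs =
    (\<Sum>rs'\<in>reg_bits n t. if rs' = swap_map n g rs then hadamard_group n t (init_state n t \<psi>) g rs' else 0)"
    unfolding ctrl_swap_def
  proof (intro sum.cong refl)
    fix rs' assume rs': "rs' \<in> reg_bits n t"
    have "(rs = swap_map n g rs') = (rs' = swap_map n g rs)"
      using swap_invol[OF rs' g] swap_invol[OF rs g] by metis
    then show "(if rs = swap_map n g rs' then 1 else 0) * hadamard_group n t (init_state n t \<psi>) g rs' =
      (if rs' = swap_map n g rs then hadamard_group n t (init_state n t \<psi>) g rs' else 0)" by simp
  qed
  also have "\<dots> = hadamard_group n t (init_state n t \<psi>) g (swap_map n g rs)"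
    using swap_reg[OF rs] by (simp add: sum.delta)
  finally show ?thesis using H_init[OF g] by simp
qed

lemma final_eq:
  assumes x: "x \<in> bits n" and rs: "rs \<in> reg_bits n t"
  shows "final_state n t \<psi> x rs = (\<Sum>g\<in>bits n. of_real (sg x g / 2^n) * Ps t \<psi> (swap_map n g rs))"
  unfolding final_state_def hadamard_group_def[of n t "ctrl_swap n t _"]
proof (intro sum.cong refl)
  fix g assume g: "g \<in> bits n"
  have sq: "sqrt (2^n) * sqrt (2^n) = (2::real)^n" by simp
  have "1 / sqrt (2 ^ n) * (-1) ^ dot2 x g * (1 / sqrt (2^n)) = sg x g / (2::real)^n"
    unfolding sg_def using sq by (simp add: field_simps)
  then show "of_real (1 / sqrt (2 ^ n) * (-1) ^ dot2 x g) * ctrl_swap n t (hadamard_group n t (init_state n t \<psi>)) g rs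
     = of_real (sg x g / 2^n) * Ps t \<psi> (swap_map n g rs)"
    unfolding C_H_init[OF g rs] by (metis (no_types, lifting) mult.assoc of_real_mult)
qed

lemma per_rs:
  assumes s: "s \<in> bits n" and rs: "rs \<in> reg_bits n t"
  shows "(\<Sum>x\<in>bits n. of_real (sg x s) * (final_state n t \<psi> x rs * cnj (final_state n t \<psi> x rs)))
       = (\<Sum>g\<in>bits n. of_real (1 / 2^n) * (Ps t \<psi> (swap_map n g rs) * cnj (Ps t \<psi> (swap_map n (xorb s g) rs))))"
proof -
  define N :: real where "N = 2^n"
  have N0: "N \<noteq> 0" by (simp add: N_def)
  define A where "A g h = Ps t \<psi> (swap_map n g rs) * cnj (Ps t \<psi> (swap_map n h rs))" for g h
  define k where "k x g h = sg x s * sg x g * sg x h / N^2" for x g h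
  have "(\<Sum>x\<in>bits n. of_real (sg x s) * (final_state n t \<psi> x rs * cnj (final_state n t \<psi> x rs)))
     = (\<Sum>x\<in>bits n. \<Sum>g\<in>bits n. \<Sum>h\<in>bits n. of_real (k x g h) * A g h)"
  proof (rule sum.cong[OF refl])
    fix x assume x: "x \<in> bits n"
    have "of_real (sg x s) * (final_state n t \<psi> x rs * cnj (final_state n t \<psi> x rs)) =
      of_real (sg x s) * ((\<Sum>g\<in>bits n. of_real (sg x g / N) * Ps t \<psi> (swap_map n g rs)) *
        (\<Sum>h\<in>bits n. of_real (sg x h / N) * cnj (Ps t \<psi> (swap_map n h rs))))"
      unfolding final_eq[OF x rs] N_def by (simp add: cnj_sum)
    also have "\<dots> = (\<Sum>g\<in>bits n. \<Sum>h\<in>bits n. of_real (sg x s) * (of_real (sg x g / N) * Ps t \<psi> (swap_map n g rs) *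
        (of_real (sg x h / N) * cnj (Ps t \<psi> (swap_map n h rs)))))"
      unfolding sum_product by (simp only: sum_distrib_left)
    also have "\<dots> = (\<Sum>g\<in>bits n. \<Sum>h\<in>bits n. of_real (k x g h) * A g h)"
      unfolding k_def A_def using N0 by (intro sum.cong refl) (simp add: field_simps power2_eq_square)
    finally show "of_real (sg x s) * (final_state n t \<psi> x rs * cnj (final_state n t \<psi> x rs)) =
       (\<Sum>g\<in>bits n. \<Sum>h\<in>bits n. of_real (k x g h) * A g h)" .
  qed
  also have "\<dots> = (\<Sum>g\<in>bits n. \<Sum>x\<in>bits n. \<Sum>h\<in>bits n. of_real (k x g h) * A g h)"
    by (rule sum.swap)
  also have "\<dots> = (\<Sum>g\<in>bits n. \<Sum>h\<in>bits n. \<Sum>x\<in>bits n. of_real (k x g h) * A g h)"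
    by (rule sum.cong[OF refl]) (rule sum.swap)
  also have "\<dots> = (\<Sum>g\<in>bits n. \<Sum>h\<in>bits n. of_real (\<Sum>x\<in>bits n. k x g h) * A g h)"
    by (simp add: of_real_sum sum_distrib_right)
  also have "\<dots> = (\<Sum>g\<in>bits n. \<Sum>h\<in>bits n. if h = xorb s g then of_real (1 / N) * A g h else 0)"
  proof (intro sum.cong refl)
    fix g h assume g: "g \<in> bits n" and h: "h \<in> bits n"
    have "(\<Sum>x\<in>bits n. k x g h) = (\<Sum>x\<in>bits n. sg x s * sg x g * sg x h) / N^2"
      unfolding k_def by (simp add: sum_divide_distrib)
    also have "\<dots> = (if h = xorb s g then 1 / N else 0)"
      unfolding triple_sum[OF s g h] N_def by (simp add: power2_eq_square)
    finally show "of_real (\<Sum>x\<in>bits n. k x g h) * A g h = (if h = xorb s g then of_real (1 / N) * A g h else 0)"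
      by simp
  qed
  also have "\<dots> = (\<Sum>g\<in>bits n. of_real (1 / N) * A g (xorb s g))"
    using s by (intro sum.cong refl) (simp add: sum.delta' xorb_bits)
  finally show ?thesis unfolding A_def N_def .
qed

lemma main_sg:
  assumes s: "s \<in> bits n"
  shows "(\<Sum>x\<in>bits n. hidden_cut_dist n t \<psi> x * sg x s) = Re (V n t \<psi> s)"
proof -
  have "complex_of_real (\<Sum>x\<in>bits n. hidden_cut_dist n t \<psi> x * sg x s)
     = (\<Sum>x\<in>bits n. \<Sum>rs\<in>reg_bits n t. of_real (sg x s) * (final_state n t \<psi> x rs * cnj (final_state n t \<psi> x rs)))"
    unfolding of_real_sum
  proof (rule sum.cong[OF refl])
    fix x
    have "complex_of_real (hidden_cut_dist n t \<psi> x * sg x s) =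
       of_real (sg x s) * (\<Sum>rs\<in>reg_bits n t. of_real ((cmod (final_state n t \<psi> x rs))^2))"
      unfolding hidden_cut_dist_def by (simp only: of_real_mult of_real_sum mult.commute)
    also have "\<dots> = of_real (sg x s) * (\<Sum>rs\<in>reg_bits n t. final_state n t \<psi> x rs * cnj (final_state n t \<psi> x rs))"
      by (simp only: complex_norm_square)
    finally show "complex_of_real (hidden_cut_dist n t \<psi> x * sg x s) =
      (\<Sum>rs\<in>reg_bits n t. of_real (sg x s) * (final_state n t \<psi> x rs * cnj (final_state n t \<psi> x rs)))"
      by (simp only: sum_distrib_left)
  qed
  also have "\<dots> = (\<Sum>rs\<in>reg_bits n t. \<Sum>x\<in>bits n. of_real (sg x s) * (final_state n t \<psi> x rs * cnj (final_state n t \<psi> x rs)))"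
    by (rule sum.swap)
  also have "\<dots> = (\<Sum>rs\<in>reg_bits n t. \<Sum>g\<in>bits n. of_real (1 / 2^n) * (Ps t \<psi> (swap_map n g rs) * cnj (Ps t \<psi> (swap_map n s (swap_map n g rs)))))"
  proof (rule sum.cong[OF refl])
    fix rs assume rs: "rs \<in> reg_bits n t"
    show "(\<Sum>x\<in>bits n. of_real (sg x s) * (final_state n t \<psi> x rs * cnj (final_state n t \<psi> x rs))) =
      (\<Sum>g\<in>bits n. of_real (1 / 2^n) * (Ps t \<psi> (swap_map n g rs) * cnj (Ps t \<psi> (swap_map n s (swap_map n g rs)))))"
      unfolding per_rs[OF s rs] by (intro sum.cong refl) (simp add: swap_comp[OF rs s])
  qed
  also have "\<dots> = (\<Sum>g\<in>bits n. of_real (1 / 2^n) * (\<Sum>rs\<in>reg_bits n t. Ps t \<psi> (swap_map n g rs) * cnj (Ps t \<psi> (swap_map n s (swap_map n g rs)))))"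
    by (subst sum.swap) (simp add: sum_distrib_left)
  also have "\<dots> = (\<Sum>g\<in>bits n. of_real (1 / 2^n) * V n t \<psi> s)"
  proof (intro sum.cong refl arg_cong2[where f="(*)"])
    fix g assume g: "g \<in> bits n"
    show "(\<Sum>rs\<in>reg_bits n t. Ps t \<psi> (swap_map n g rs) * cnj (Ps t \<psi> (swap_map n s (swap_map n g rs)))) = V n t \<psi> s"
      unfolding V_def
      by (rule sum.reindex_bij_witness[where i="swap_map n g" and j="swap_map n g"])
         (auto simp: swap_invol[OF _ g] swap_reg)
  qed
  also have "\<dots> = V n t \<psi> s" by (simp add: card_bits)
  finally show ?thesis by (metis Re_complex_of_real)
qed

theorem mainTheorem7:
  fixes n t :: nat and \<psi> :: "bool list \<Rightarrow> complex" and s :: "bool list"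
  assumes "pure_state n \<psi>" and "t \<ge> 1" and "s \<in> bits n"
  shows "(\<Sum>x\<in>bits n. hidden_cut_dist n t \<psi> x * real (dot2 x s))
           = (1 - purity n \<psi> s ^ t) / 2"
proof -
  have z: "replicate n False \<in> bits n" by (simp add: bits_def)
  have E0: "(\<Sum>x\<in>bits n. hidden_cut_dist n t \<psi> x) = 1"
  proof -
    have "(\<Sum>x\<in>bits n. hidden_cut_dist n t \<psi> x) = (\<Sum>x\<in>bits n. hidden_cut_dist n t \<psi> x * sg x (replicate n False))"
      by (intro sum.cong refl) (simp add: sg_zero)
    also have "\<dots> = 1" unfolding main_sg[OF z] V_pow Zs_zero[OF assms(1)] by simp
    finally show ?thesis .
  qed
  have E1: "(\<Sum>x\<in>bits n. hidden_cut_dist n t \<psi> x * sg x s) = purity n \<psi> s ^ t"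
    unfolding main_sg[OF assms(3)] V_pow Zs_purity[OF assms(3)]
    by (metis Re_complex_of_real of_real_power)
  have "(\<Sum>x\<in>bits n. hidden_cut_dist n t \<psi> x * real (dot2 x s))
     = (\<Sum>x\<in>bits n. (hidden_cut_dist n t \<psi> x - hidden_cut_dist n t \<psi> x * sg x s) / 2)"
    by (intro sum.cong refl) (simp add: dot2_sg field_simps)
  also have "\<dots> = (\<Sum>x\<in>bits n. hidden_cut_dist n t \<psi> x - hidden_cut_dist n t \<psi> x * sg x s) / 2"
    by (rule sum_divide_distrib[symmetric])
  also have "\<dots> = ((\<Sum>x\<in>bits n. hidden_cut_dist n t \<psi> x) - (\<Sum>x\<in>bits n. hidden_cut_dist n t \<psi> x * sg x s)) / 2"
    by (simp only: sum_subtractf)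
  finally have "(\<Sum>x\<in>bits n. hidden_cut_dist n t \<psi> x * real (dot2 x s))
     = ((\<Sum>x\<in>bits n. hidden_cut_dist n t \<psi> x) - (\<Sum>x\<in>bits n. hidden_cut_dist n t \<psi> x * sg x s)) / 2" .
  then show ?thesis using E0 E1 by simp
qed

end
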